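(* Let $p,q\ge1$ and let $X\in\mathbb{R}^p$, $Y\in\mathbb{R}^q$ be random vectors. Then $X$ and $Y$ are independent if and only if $\mathcal{V}^2(u^tX,v^tY)=0$ for every $u\in\mathcal{S}^{p-1}=\{u\in\mathbb{R}^p:|u|=1\}$ and every $v\in\mathcal{S}^{q-1}$.
   Context: $|\cdot|$ is the Euclidean norm. For random vectors $X\in\mathbb{R}^p$, $Y\in\mathbb{R}^q$ with characteristic functions $\phi_X,\phi_Y$ and joint characteristic function $\phi_{X,Y}$, the distance covariance is $$\mathcal{V}^2(X,Y)=\int_{\mathbb{R}^{p+q}}\frac{|\phi_{X,Y}(t,s)-\phi_X(t)\phi_Y(s)|^2}{c_pc_q|t|^{p+1}|s|^{q+1}}\,dt\,ds,\qquad c_p=\frac{\pi^{(p+1)/2}}{\Gamma((p+1)/2)}.$$ (Applied with $p=q=1$ to the univariate projections $u^tX$, $v^tY$.) *)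

theory Defs
  imports "HOL-Probability.Probability"
begin

text \<open>Independence of two random variables with possibly different value types
  (the library's indep_var needs equal types): independence of the generated
  sigma-algebras, as in the library lemma indep_var_eq.\<close>
definition indep_rv :: "'a measure \<Rightarrow> ('a \<Rightarrow> 'b::topological_space) \<Rightarrow> ('a \<Rightarrow> 'c::topological_space) \<Rightarrow> bool" where
  "indep_rv M X Y \<longleftrightarrow>
     X \<in> borel_measurable M \<and> Y \<in> borel_measurable M \<and>
     prob_space.indep_set M
       (sigma_sets (space M) {X -` A \<inter> space M | A. A \<in> sets borel})
       (sigma_sets (space M) {Y -` B \<inter> space M | B. B \<in> sets borel})"

definition dc_const :: "nat \<Rightarrow> real" where
  "dc_const p = pi powr ((real p + 1) / 2) / Gamma ((real p + 1) / 2)"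

definition charf :: "'a measure \<Rightarrow> ('a \<Rightarrow> real) \<Rightarrow> real \<Rightarrow> complex" where
  "charf M U t = (CLINT \<omega>|M. iexp (t * U \<omega>))"

definition charf2 :: "'a measure \<Rightarrow> ('a \<Rightarrow> real) \<Rightarrow> ('a \<Rightarrow> real) \<Rightarrow> real \<Rightarrow> real \<Rightarrow> complex" where
  "charf2 M U V t s = (CLINT \<omega>|M. iexp (t * U \<omega> + s * V \<omega>))"

text \<open>Squared distance covariance of univariate U, V (p = q = 1), as a
  (possibly infinite) nonnegative Lebesgue integral over R^2.\<close>
definition dcov2 :: "'a measure \<Rightarrow> ('a \<Rightarrow> real) \<Rightarrow> ('a \<Rightarrow> real) \<Rightarrow> ennreal" where
  "dcov2 M U V = (\<integral>\<^sup>+ ts. ennreal ((cmod (charf2 M U V (fst ts) (snd ts)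
        - charf M U (fst ts) * charf M V (snd ts)))\<^sup>2
      / (dc_const 1 * dc_const 1 * \<bar>fst ts\<bar> powr 2 * \<bar>snd ts\<bar> powr 2))
      \<partial>(lborel \<Otimes>\<^sub>M lborel))"

end

theory Submission
  imports Defs
begin

lemma levy_weighted:
  fixes \<mu> \<nu> :: "'e measure" and g1 g2 \<phi> :: "'e \<Rightarrow> real"
  assumes P: "prob_space \<mu>" "prob_space \<nu>"
    and [measurable]: "g1 \<in> borel_measurable \<mu>" "g2 \<in> borel_measurable \<nu>"
      "\<phi> \<in> borel_measurable \<mu>" "\<phi> \<in> borel_measurable \<nu>"
    and g1b: "\<And>x. 0 \<le> g1 x \<and> g1 x \<le> K" and g2b: "\<And>x. 0 \<le> g2 x \<and> g2 x \<le> K"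
    and ch: "\<And>t. (CLINT x|\<mu>. complex_of_real (g1 x) * iexp (t * \<phi> x)) =
                 (CLINT x|\<nu>. complex_of_real (g2 x) * iexp (t * \<phi> x))"
    and that: "A \<in> sets borel"
  shows "(\<integral>x. g1 x * indicator A (\<phi> x) \<partial>\<mu>) = (\<integral>x. g2 x * indicator A (\<phi> x) \<partial>\<nu>)"
proof -
  interpret m1: prob_space \<mu> by (rule P)
  interpret m2: prob_space \<nu> by (rule P)
  have int1: "integrable \<mu> g1"
    by (rule m1.integrable_const_bound[where B=K]) (use g1b in auto)
  have int2: "integrable \<nu> g2"
    by (rule m2.integrable_const_bound[where B=K]) (use g2b in auto)
  have int1': "integrable \<mu> (\<lambda>x. g1 x * indicator A (\<phi> x))"
    by (rule m1.integrable_const_bound[where B=K]) (use g1b that in \<open>auto simp: indicator_def intro: order_trans[OF _ g1b[THEN conjunct2]]\<close>)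
  have int2': "integrable \<nu> (\<lambda>x. g2 x * indicator A (\<phi> x))"
    by (rule m2.integrable_const_bound[where B=K]) (use g2b that in \<open>auto simp: indicator_def intro: order_trans[OF _ g2b[THEN conjunct2]]\<close>)
  define m where "m = integral\<^sup>L \<mu> g1"
  have "complex_of_real (integral\<^sup>L \<mu> g1) = complex_of_real (integral\<^sup>L \<nu> g2)"
    using ch[of 0] by simp
  then have mm: "integral\<^sup>L \<nu> g2 = m" by (simp add: m_def)
  have m0: "m \<ge> 0" unfolding m_def using g1b by (simp add: integral_nonneg)
  show ?thesis
  proof (cases "m = 0")
    case True
    have "AE x in \<mu>. g1 x = 0"
      using integral_nonneg_eq_0_iff_AE[OF int1] g1b True m_def by auto
    then have z1: "(\<integral>x. g1 x * indicator A (\<phi> x) \<partial>\<mu>) = 0"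
      by (intro integral_eq_zero_AE) auto
    have "AE x in \<nu>. g2 x = 0"
      using integral_nonneg_eq_0_iff_AE[OF int2] g2b True mm by auto
    then have z2: "(\<integral>x. g2 x * indicator A (\<phi> x) \<partial>\<nu>) = 0"
      by (intro integral_eq_zero_AE) auto
    show ?thesis using z1 z2 by simp
  next
    case False
    then have mpos: "m > 0" using m0 by simp
    define N1 where "N1 = distr (density \<mu> (\<lambda>x. ennreal (g1 x / m))) borel \<phi>"
    define N2 where "N2 = distr (density \<nu> (\<lambda>x. ennreal (g2 x / m))) borel \<phi>"
    have d1: "prob_space (density \<mu> (\<lambda>x. ennreal (g1 x / m)))"
    proof (rule prob_spaceI)
      have "(\<integral>\<^sup>+x. ennreal (g1 x / m) \<partial>\<mu>) = ennreal (\<integral>x. g1 x / m \<partial>\<mu>)"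
        using int1 g1b mpos by (intro nn_integral_eq_integral) auto
      also have "\<dots> = 1" using mpos by (simp add: m_def)
      finally show "emeasure (density \<mu> (\<lambda>x. ennreal (g1 x / m))) (space (density \<mu> (\<lambda>x. ennreal (g1 x / m)))) = 1"
        by (simp add: emeasure_density nn_integral_set_ennreal[symmetric])
    qed
    have d2: "prob_space (density \<nu> (\<lambda>x. ennreal (g2 x / m)))"
    proof (rule prob_spaceI)
      have "(\<integral>\<^sup>+x. ennreal (g2 x / m) \<partial>\<nu>) = ennreal (\<integral>x. g2 x / m \<partial>\<nu>)"
        using int2 g2b mpos by (intro nn_integral_eq_integral) auto
      also have "\<dots> = 1" using mpos mm by simp
      finally show "emeasure (density \<nu> (\<lambda>x. ennreal (g2 x / m))) (space (density \<nu> (\<lambda>x. ennreal (g2 x / m)))) = 1"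
        by (simp add: emeasure_density nn_integral_set_ennreal[symmetric])
    qed
    have R1: "real_distribution N1" unfolding N1_def real_distribution_def real_distribution_axioms_def
      by (auto intro!: prob_space.prob_space_distr[OF d1])
    have R2: "real_distribution N2" unfolding N2_def real_distribution_def real_distribution_axioms_def
      by (auto intro!: prob_space.prob_space_distr[OF d2])
    have I1: "integral\<^sup>L N1 f = (\<integral>x. (g1 x / m) *\<^sub>R f (\<phi> x) \<partial>\<mu>)"
      if [measurable]: "f \<in> borel_measurable borel" for f :: "real \<Rightarrow> 'b::{banach, second_countable_topology}"
      unfolding N1_def using g1b mpos
      by (simp add: integral_distr integral_density)
    have I2: "integral\<^sup>L N2 f = (\<integral>x. (g2 x / m) *\<^sub>R f (\<phi> x) \<partial>\<nu>)"
      if [measurable]: "f \<in> borel_measurable borel" for f :: "real \<Rightarrow> 'b::{banach, second_countable_topology}"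
      unfolding N2_def using g2b mpos
      by (simp add: integral_distr integral_density)
    have "char N1 = char N2"
    proof
      fix t
      have "char N1 t = (CLINT x|\<mu>. complex_of_real (g1 x) * iexp (t * \<phi> x)) / m"
        unfolding char_def by (subst I1) (auto simp: scaleR_conv_of_real)
      also have "\<dots> = (CLINT x|\<nu>. complex_of_real (g2 x) * iexp (t * \<phi> x)) / m"
        using ch[of t] by simp
      also have "\<dots> = char N2 t"
        unfolding char_def by (subst I2) (auto simp: scaleR_conv_of_real)
      finally show "char N1 t = char N2 t" .
    qed
    then have "N1 = N2" using Levy_uniqueness R1 R2 by blast
    then have "integral\<^sup>L N1 (indicator A) = (integral\<^sup>L N2 (indicator A) :: real)" by simp
    then have "(\<integral>x. (g1 x / m) * indicator A (\<phi> x) \<partial>\<mu>) = (\<integral>x. (g2 x / m) * indicator A (\<phi> x) \<partial>\<nu>)"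
      using that by (subst (asm) I1, simp, subst (asm) I2, simp, simp)
    then show ?thesis using mpos by simp
  qed
qed

lemma intg_bound:
  fixes f :: "'a \<Rightarrow> 'b::{banach,second_countable_topology}"
  assumes "prob_space \<mu>" "f \<in> borel_measurable \<mu>" "\<And>x. norm (f x) \<le> B"
  shows "integrable \<mu> f"
proof -
  interpret prob_space \<mu> by fact
  show ?thesis by (rule integrable_const_bound[where B=B]) (use assms in auto)
qed

definition G :: "'e::euclidean_space set \<Rightarrow> ('e \<Rightarrow> real) \<Rightarrow> ('e \<Rightarrow> real) \<Rightarrow> 'e \<Rightarrow> real" where
  "G S l h x = (\<Prod>b\<in>S. indicator {l b<..<h b} (x \<bullet> b))"

lemma G_meas[measurable]: "G S l h \<in> borel_measurable borel"
  unfolding G_def by measurable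

lemma G_bound: "0 \<le> G S l h x \<and> G S l h x \<le> 1"
  unfolding G_def by (auto intro!: prod_nonneg prod_le_1 simp: indicator_def)

lemma test_meas: "(\<lambda>x::'e::euclidean_space. complex_of_real (F x) * iexp (w \<bullet> x)) \<in> borel_measurable borel"
  if [measurable]: "F \<in> borel_measurable borel"
  by measurable

lemma cos_iexp: "complex_of_real (cos \<theta>) = (iexp \<theta> + iexp (- \<theta>)) / 2"
  by (simp add: cos_of_real[symmetric] cos_exp_eq)

lemma sin_iexp: "complex_of_real (sin \<theta>) = (iexp \<theta> - iexp (- \<theta>)) / (2 * \<i>)"
  by (simp add: sin_of_real[symmetric] sin_exp_eq)


definition J :: "'e::euclidean_space measure \<Rightarrow> ('e \<Rightarrow> real) \<Rightarrow> 'e \<Rightarrow> complex" where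
  "J \<mu> F w = (CLINT x|\<mu>. complex_of_real (F x) * iexp (w \<bullet> x))"

lemma iexp_add: "iexp (a + b) = iexp a * iexp b"
  by (simp add: distrib_left exp_add)

lemma alg_cos: "(f::complex) * (1 + (p + q) / 2) * r = f * r + (f * (p * r) + f * (q * r)) / 2"
  by (simp add: field_simps)

lemma alg_sin: "(f::complex) * (1 + (p - q) / (2 * \<i>)) * r = f * r + (f * (p * r) - f * (q * r)) / (2 * \<i>)"
  by (simp add: field_simps)

lemma dec_cos:
  fixes \<mu> :: "'e::euclidean_space measure"
  assumes P: "prob_space \<mu>" and S: "sets \<mu> = sets borel"
    and [measurable]: "F \<in> borel_measurable borel" and Fb: "\<And>x. \<bar>F x\<bar> \<le> 1"
  shows "(CLINT x|\<mu>. complex_of_real (F x * (1 + cos (w \<bullet> x))) * iexp (t * (x \<bullet> k)))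
     = J \<mu> F (t *\<^sub>R k) + (J \<mu> F (w + t *\<^sub>R k) + J \<mu> F (- w + t *\<^sub>R k)) / 2"
proof -
  have M: "borel_measurable \<mu> = borel_measurable borel" using S by (rule measurable_cong_sets) auto
  have int: "integrable \<mu> (\<lambda>x. complex_of_real (F x) * iexp (v \<bullet> x))" for v
    by (rule intg_bound[OF P, where B=1]) (auto simp: M norm_mult Fb)
  have pt: "complex_of_real (F x * (1 + cos (w \<bullet> x))) * iexp (t * (x \<bullet> k)) =
     complex_of_real (F x) * iexp ((t *\<^sub>R k) \<bullet> x) +
     (complex_of_real (F x) * iexp ((w + t *\<^sub>R k) \<bullet> x) +
      complex_of_real (F x) * iexp ((- w + t *\<^sub>R k) \<bullet> x)) / 2" for x
  proof -
    have a: "(w + t *\<^sub>R k) \<bullet> x = w \<bullet> x + t * (x \<bullet> k)" "(- w + t *\<^sub>R k) \<bullet> x = - (w \<bullet> x) + t * (x \<bullet> k)"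
      "(t *\<^sub>R k) \<bullet> x = t * (x \<bullet> k)" by (simp_all add: inner_add_left inner_minus_left inner_diff_left inner_commute[of k x])
    show ?thesis
      by (simp only: a iexp_add, simp only: of_real_mult[of "F x"] of_real_add[of 1] of_real_1 cos_iexp, rule alg_cos)
  qed
  show ?thesis unfolding J_def
    apply (simp only: pt)
    apply (subst Bochner_Integration.integral_add[OF int integrable_divide_zero[OF Bochner_Integration.integrable_add[OF int int]]])
    apply (subst integral_divide_zero)
    apply (subst Bochner_Integration.integral_add[OF int int])
    apply (rule refl)
    done
qed

lemma dec_sin:
  fixes \<mu> :: "'e::euclidean_space measure"
  assumes P: "prob_space \<mu>" and S: "sets \<mu> = sets borel"
    and [measurable]: "F \<in> borel_measurable borel" and Fb: "\<And>x. \<bar>F x\<bar> \<le> 1"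
  shows "(CLINT x|\<mu>. complex_of_real (F x * (1 + sin (w \<bullet> x))) * iexp (t * (x \<bullet> k)))
     = J \<mu> F (t *\<^sub>R k) + (J \<mu> F (w + t *\<^sub>R k) - J \<mu> F (- w + t *\<^sub>R k)) / (2 * \<i>)"
proof -
  have M: "borel_measurable \<mu> = borel_measurable borel" using S by (rule measurable_cong_sets) auto
  have int: "integrable \<mu> (\<lambda>x. complex_of_real (F x) * iexp (v \<bullet> x))" for v
    by (rule intg_bound[OF P, where B=1]) (auto simp: M norm_mult Fb)
  have pt: "complex_of_real (F x * (1 + sin (w \<bullet> x))) * iexp (t * (x \<bullet> k)) =
     complex_of_real (F x) * iexp ((t *\<^sub>R k) \<bullet> x) +
     (complex_of_real (F x) * iexp ((w + t *\<^sub>R k) \<bullet> x) -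
      complex_of_real (F x) * iexp ((- w + t *\<^sub>R k) \<bullet> x)) / (2 * \<i>)" for x
  proof -
    have a: "(w + t *\<^sub>R k) \<bullet> x = w \<bullet> x + t * (x \<bullet> k)" "(- w + t *\<^sub>R k) \<bullet> x = - (w \<bullet> x) + t * (x \<bullet> k)"
      "(t *\<^sub>R k) \<bullet> x = t * (x \<bullet> k)" by (simp_all add: inner_add_left inner_minus_left inner_diff_left inner_commute[of k x])
    show ?thesis
      by (simp only: a iexp_add, simp only: of_real_mult[of "F x"] of_real_add[of 1] of_real_1 sin_iexp, rule alg_sin)
  qed
  show ?thesis unfolding J_def
    apply (simp only: pt)
    apply (subst Bochner_Integration.integral_add[OF int integrable_divide_zero[OF Bochner_Integration.integrable_diff[OF int int]]])
    apply (subst integral_divide_zero)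
    apply (subst Bochner_Integration.integral_diff[OF int int])
    apply (rule refl)
    done
qed

lemma dec_final:
  fixes \<mu> :: "'e::euclidean_space measure"
  assumes P: "prob_space \<mu>" and S: "sets \<mu> = sets borel"
    and [measurable]: "F \<in> borel_measurable borel" and Fb: "\<And>x. \<bar>F x\<bar> \<le> 1"
    and A[measurable]: "A \<in> sets borel"
  shows "J \<mu> (\<lambda>x. indicator A (x \<bullet> k) * F x) w =
    complex_of_real ((\<integral>x. (F x * (1 + cos (w \<bullet> x))) * indicator A (x \<bullet> k) \<partial>\<mu>)
       - (\<integral>x. F x * indicator A (x \<bullet> k) \<partial>\<mu>))
    + \<i> * complex_of_real ((\<integral>x. (F x * (1 + sin (w \<bullet> x))) * indicator A (x \<bullet> k) \<partial>\<mu>)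
       - (\<integral>x. F x * indicator A (x \<bullet> k) \<partial>\<mu>))"
proof -
  have M: "borel_measurable \<mu> = borel_measurable borel" using S by (rule measurable_cong_sets) auto
  have ib: "\<bar>indicator A y * (F x :: real)\<bar> \<le> 1" for x y
    using Fb[of x] by (auto simp: indicator_def)
  have i1: "integrable \<mu> (\<lambda>x. F x * indicator A (x \<bullet> k))"
    by (rule intg_bound[OF P, where B=1]) (auto simp: M Fb indicator_def)
  have i2: "integrable \<mu> (\<lambda>x. F x * indicator A (x \<bullet> k) * cos (w \<bullet> x))"
    by (rule intg_bound[OF P, where B=1]) (auto simp: M Fb indicator_def abs_mult intro!: mult_le_one)
  have i3: "integrable \<mu> (\<lambda>x. F x * indicator A (x \<bullet> k) * sin (w \<bullet> x))"
    by (rule intg_bound[OF P, where B=1]) (auto simp: M Fb indicator_def abs_mult intro!: mult_le_one)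
  have e1: "(\<integral>x. (F x * (1 + cos (w \<bullet> x))) * indicator A (x \<bullet> k) \<partial>\<mu>) =
     (\<integral>x. F x * indicator A (x \<bullet> k) \<partial>\<mu>) + (\<integral>x. F x * indicator A (x \<bullet> k) * cos (w \<bullet> x) \<partial>\<mu>)"
    by (subst Bochner_Integration.integral_add[OF i1 i2, symmetric]) (auto intro!: integral_cong simp: algebra_simps)
  have e2: "(\<integral>x. (F x * (1 + sin (w \<bullet> x))) * indicator A (x \<bullet> k) \<partial>\<mu>) =
     (\<integral>x. F x * indicator A (x \<bullet> k) \<partial>\<mu>) + (\<integral>x. F x * indicator A (x \<bullet> k) * sin (w \<bullet> x) \<partial>\<mu>)"
    by (subst Bochner_Integration.integral_add[OF i1 i3, symmetric]) (auto intro!: integral_cong simp: algebra_simps)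
  have pt: "complex_of_real (indicator A (x \<bullet> k) * F x) * iexp (w \<bullet> x) =
      complex_of_real (F x * indicator A (x \<bullet> k) * cos (w \<bullet> x)) +
      \<i> * complex_of_real (F x * indicator A (x \<bullet> k) * sin (w \<bullet> x))" for x
    by (simp add: Euler algebra_simps cos_of_real sin_of_real)
  have "J \<mu> (\<lambda>x. indicator A (x \<bullet> k) * F x) w =
     complex_of_real (\<integral>x. F x * indicator A (x \<bullet> k) * cos (w \<bullet> x) \<partial>\<mu>) +
     \<i> * complex_of_real (\<integral>x. F x * indicator A (x \<bullet> k) * sin (w \<bullet> x) \<partial>\<mu>)"
    unfolding J_def pt
    by (subst Bochner_Integration.integral_add[OF integrable_of_real[OF i2] integrable_mult_right[OF integrable_of_real[OF i3]]])
       (simp only: integral_mult_right_zero integral_complex_of_real)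
  then show ?thesis by (simp add: e1 e2)
qed


lemma bnd2: "0 \<le> (a::real) \<Longrightarrow> a \<le> 1 \<Longrightarrow> -1 \<le> c \<Longrightarrow> c \<le> 1 \<Longrightarrow> 0 \<le> a * (1 + c) \<and> a * (1 + c) \<le> 2"
proof -
  assume h: "0 \<le> a" "a \<le> 1" "-1 \<le> c" "c \<le> 1"
  have "a * (1 + c) \<le> 1 * 2" by (rule mult_mono) (use h in auto)
  then show ?thesis using h by simp
qed

lemma G_insert: "k \<notin> S \<Longrightarrow> finite S \<Longrightarrow> G (insert k S) l h x = indicator {l k<..<h k} (x \<bullet> k) * G S l h x"
  unfolding G_def by simp

lemma char_uniq:
  fixes \<mu> \<nu> :: "'e::euclidean_space measure"
  assumes P: "prob_space \<mu>" "prob_space \<nu>" and S: "sets \<mu> = sets borel" "sets \<nu> = sets borel"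
    and ch: "\<And>w. (CLINT x|\<mu>. iexp (w \<bullet> x)) = (CLINT x|\<nu>. iexp (w \<bullet> x))"
  shows "\<mu> = \<nu>"
proof -
  have M1: "borel_measurable \<mu> = borel_measurable borel" using S(1) by (rule measurable_cong_sets) auto
  have M2: "borel_measurable \<nu> = borel_measurable borel" using S(2) by (rule measurable_cong_sets) auto
  have claim: "\<forall>l h w. (\<forall>b\<in>S. w \<bullet> b = 0) \<longrightarrow> J \<mu> (G S l h) w = J \<nu> (G S l h) w"
    if "finite S" "S \<subseteq> Basis" for S
    using that
  proof (induction S rule: finite_induct)
    case empty
    then show ?case using ch by (simp add: J_def G_def)
  next
    case (insert k S)
    have kB: "k \<in> Basis" using insert by auto
    have IH: "J \<mu> (G S l h) v = J \<nu> (G S l h) v" if "\<And>b. b \<in> S \<Longrightarrow> v \<bullet> b = 0" for l h v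
      using insert that by auto
    have kS: "(t *\<^sub>R k) \<bullet> b = 0" if "b \<in> S" for t b
    proof -
      have "b \<in> Basis" "b \<noteq> k" using that insert by auto
      then show ?thesis using kB by (simp add: inner_Basis)
    qed
    show ?case
    proof (intro allI impI)
      fix l h w assume w0: "\<forall>b\<in>insert k S. w \<bullet> b = 0"
      define F where "F = G S l h"
      have Fm[measurable]: "F \<in> borel_measurable borel" unfolding F_def by simp
      have Fb: "\<bar>F x\<bar> \<le> 1" for x unfolding F_def using G_bound[of S l h x] by auto
      have Fb2: "0 \<le> F x \<and> F x \<le> 1" for x unfolding F_def using G_bound[of S l h x] by auto
      have IHs: "J \<mu> F (s *\<^sub>R w + t *\<^sub>R k) = J \<nu> F (s *\<^sub>R w + t *\<^sub>R k)" for s t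
        unfolding F_def using w0 kS by (intro IH) (auto simp: inner_add_left)
      have IHw: "J \<mu> F (w + t *\<^sub>R k) = J \<nu> F (w + t *\<^sub>R k)"
           "J \<mu> F (- w + t *\<^sub>R k) = J \<nu> F (- w + t *\<^sub>R k)"
           "J \<mu> F (t *\<^sub>R k) = J \<nu> F (t *\<^sub>R k)" for t
        using IHs[of 1 t] IHs[of "-1" t] IHs[of 0 t] by simp_all
      let ?A = "{l k<..<h k}"
      have L0: "(\<integral>x. F x * indicator ?A (x \<bullet> k) \<partial>\<mu>) = (\<integral>x. F x * indicator ?A (x \<bullet> k) \<partial>\<nu>)"
      proof (rule levy_weighted[OF P, where K=1])
        fix t
        have "(CLINT x|\<mu>. complex_of_real (F x) * iexp (t * (x \<bullet> k))) = J \<mu> F (t *\<^sub>R k)"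
          unfolding J_def by (simp add: inner_commute)
        moreover have "(CLINT x|\<nu>. complex_of_real (F x) * iexp (t * (x \<bullet> k))) = J \<nu> F (t *\<^sub>R k)"
          unfolding J_def by (simp add: inner_commute)
        ultimately show "(CLINT x|\<mu>. complex_of_real (F x) * iexp (t * (x \<bullet> k))) =
            (CLINT x|\<nu>. complex_of_real (F x) * iexp (t * (x \<bullet> k)))" using IHw by simp
      qed (auto simp: M1 M2 Fb2)
      have Lc: "(\<integral>x. (F x * (1 + cos (w \<bullet> x))) * indicator ?A (x \<bullet> k) \<partial>\<mu>) =
                (\<integral>x. (F x * (1 + cos (w \<bullet> x))) * indicator ?A (x \<bullet> k) \<partial>\<nu>)"
      proof (rule levy_weighted[OF P, where K=2])
        fix t
        show "(CLINT x|\<mu>. complex_of_real (F x * (1 + cos (w \<bullet> x))) * iexp (t * (x \<bullet> k))) =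
            (CLINT x|\<nu>. complex_of_real (F x * (1 + cos (w \<bullet> x))) * iexp (t * (x \<bullet> k)))"
          by (simp only: dec_cos[OF P(1) S(1) Fm Fb] dec_cos[OF P(2) S(2) Fm Fb] IHw)
      next
        fix x show "0 \<le> F x * (1 + cos (w \<bullet> x)) \<and> F x * (1 + cos (w \<bullet> x)) \<le> 2"
          using Fb2[of x] by (intro bnd2) auto
      next
        fix x show "0 \<le> F x * (1 + cos (w \<bullet> x)) \<and> F x * (1 + cos (w \<bullet> x)) \<le> 2"
          using Fb2[of x] by (intro bnd2) auto
      qed (auto simp: M1 M2)
      have Ls: "(\<integral>x. (F x * (1 + sin (w \<bullet> x))) * indicator ?A (x \<bullet> k) \<partial>\<mu>) =
                (\<integral>x. (F x * (1 + sin (w \<bullet> x))) * indicator ?A (x \<bullet> k) \<partial>\<nu>)"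
      proof (rule levy_weighted[OF P, where K=2])
        fix t
        show "(CLINT x|\<mu>. complex_of_real (F x * (1 + sin (w \<bullet> x))) * iexp (t * (x \<bullet> k))) =
            (CLINT x|\<nu>. complex_of_real (F x * (1 + sin (w \<bullet> x))) * iexp (t * (x \<bullet> k)))"
          by (simp only: dec_sin[OF P(1) S(1) Fm Fb] dec_sin[OF P(2) S(2) Fm Fb] IHw)
      next
        fix x show "0 \<le> F x * (1 + sin (w \<bullet> x)) \<and> F x * (1 + sin (w \<bullet> x)) \<le> 2"
          using Fb2[of x] by (intro bnd2) auto
      next
        fix x show "0 \<le> F x * (1 + sin (w \<bullet> x)) \<and> F x * (1 + sin (w \<bullet> x)) \<le> 2"
          using Fb2[of x] by (intro bnd2) auto
      qed (auto simp: M1 M2)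
      have GI: "G (insert k S) l h = (\<lambda>x. indicator ?A (x \<bullet> k) * F x)"
        unfolding F_def using insert by (simp add: G_insert fun_eq_iff)
      show "J \<mu> (G (insert k S) l h) w = J \<nu> (G (insert k S) l h) w"
      proof -
        have Am: "?A \<in> sets borel" by simp
        show ?thesis unfolding GI
          by (simp only: dec_final[OF P(1) S(1) Fm Fb Am] dec_final[OF P(2) S(2) Fm Fb Am] L0 Lc Ls)
      qed
    qed
  qed
  interpret m1: prob_space \<mu> by (rule P)
  interpret m2: prob_space \<nu> by (rule P)
  define Bx where "Bx l h = {x::'e. \<forall>b\<in>Basis. l b < x \<bullet> b \<and> x \<bullet> b < h b}" for l h
  have Bxm[measurable]: "Bx l h \<in> sets borel" for l h
    unfolding Bx_def by measurable
  have GB: "G Basis l h = indicator (Bx l h)" for l h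
    unfolding G_def Bx_def by (auto simp: fun_eq_iff indicator_def)
  have eqB: "measure \<mu> (Bx l h) = measure \<nu> (Bx l h)" for l h
  proof -
    have "J \<mu> (G Basis l h) 0 = J \<nu> (G Basis l h) 0" using claim[of Basis] by auto
    then have "complex_of_real (integral\<^sup>L \<mu> (indicator (Bx l h))) = complex_of_real (integral\<^sup>L \<nu> (indicator (Bx l h)))"
      unfolding J_def GB by simp
    then have "integral\<^sup>L \<mu> (indicator (Bx l h)) = (integral\<^sup>L \<nu> (indicator (Bx l h)) :: real)"
      by simp
    moreover have "integral\<^sup>L \<mu> (indicator (Bx l h)) = (measure \<mu> (Bx l h) :: real)"
      by (simp add: sets_eq_imp_space_eq[OF S(1)] sets_eq_imp_space_eq[OF S(2)])
    moreover have "integral\<^sup>L \<nu> (indicator (Bx l h)) = (measure \<nu> (Bx l h) :: real)"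
      by (simp add: sets_eq_imp_space_eq[OF S(1)] sets_eq_imp_space_eq[OF S(2)])
    ultimately show ?thesis by simp
  qed
  define E where "E = insert UNIV (range (\<lambda>(l, h). Bx l h))"
  have sE: "sigma_sets UNIV E = sets borel"
  proof -
    have "sigma_sets UNIV E = sigma_sets UNIV (range (\<lambda>(a, b). box a b :: 'e set))"
    proof (rule sigma_sets_eqI)
      fix a assume "a \<in> E"
      then have "a \<in> sets borel" unfolding E_def by auto
      then show "a \<in> sigma_sets UNIV (range (\<lambda>(a, b). box a b :: 'e set))"
        by (metis borel_eq_box sets_measure_of top_greatest Pow_UNIV)
    next
      fix b assume "b \<in> range (\<lambda>(a, b). box a b :: 'e set)"
      then obtain a c where "b = box a c" by auto
      then have "b = Bx (\<lambda>i. a \<bullet> i) (\<lambda>i. c \<bullet> i)" unfolding Bx_def box_def by auto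
      then show "b \<in> sigma_sets UNIV E" unfolding E_def by (auto intro: sigma_sets.Basic)
    qed
    also have "\<dots> = sets borel"
      by (metis borel_eq_box sets_measure_of top_greatest Pow_UNIV)
    finally show ?thesis .
  qed
  show ?thesis
  proof (rule measure_eqI_generator_eq[where E=E and \<Omega>=UNIV and A="\<lambda>_. UNIV"])
    show "Int_stable E"
    proof (rule Int_stableI)
      fix a b assume "a \<in> E" "b \<in> E"
      then show "a \<inter> b \<in> E" unfolding E_def
      proof (elim insertE)
        fix l h l' h' assume "a \<in> range (\<lambda>(l, h). Bx l h)" "b \<in> range (\<lambda>(l, h). Bx l h)"
        then obtain l h l' h' where ab: "a = Bx l h" "b = Bx l' h'" by auto
        have "a \<inter> b = Bx (\<lambda>i. max (l i) (l' i)) (\<lambda>i. min (h i) (h' i))"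
          unfolding ab Bx_def by auto
        then show "a \<inter> b \<in> insert UNIV (range (\<lambda>(l, h). Bx l h))" by auto
      qed auto
    qed
    show "E \<subseteq> Pow UNIV" by simp
    fix X assume "X \<in> E"
    then show "emeasure \<mu> X = emeasure \<nu> X" unfolding E_def
      using eqB S m1.emeasure_space_1 m2.emeasure_space_1
      by (auto simp: m1.emeasure_eq_measure m2.emeasure_eq_measure sets_eq_imp_space_eq[OF S(1)] sets_eq_imp_space_eq[OF S(2)])
  qed (use S sE E_def in auto)
qed


lemma cont_int:
  fixes g :: "'p::metric_space \<Rightarrow> 'a \<Rightarrow> real"
  assumes P: "prob_space M" and meas: "\<And>p. g p \<in> borel_measurable M"
    and c: "\<And>\<omega>. isCont (\<lambda>p. g p \<omega>) p0"
  shows "isCont (\<lambda>p. CLINT \<omega>|M. iexp (g p \<omega>)) p0"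
proof -
  interpret prob_space M by (rule P)
  have [measurable]: "g p \<in> borel_measurable M" for p by (rule meas)
  have m2: "(\<lambda>\<omega>. iexp (g p \<omega>)) \<in> borel_measurable M" for p by measurable
  show ?thesis
  proof (rule continuous_at_sequentiallyI)
    fix u assume u: "u \<longlonglongrightarrow> p0"
    show "(\<lambda>n. CLINT \<omega>|M. iexp (g (u n) \<omega>)) \<longlonglongrightarrow> (CLINT \<omega>|M. iexp (g p0 \<omega>))"
    proof (rule integral_dominated_convergence[where w="\<lambda>_. 1"])
      show "AE x in M. (\<lambda>i. iexp (g (u i) x)) \<longlonglongrightarrow> iexp (g p0 x)"
      proof (rule AE_I2)
        fix x
        have "(\<lambda>i. g (u i) x) \<longlonglongrightarrow> g p0 x"
          by (rule isCont_tendsto_compose[OF c u])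
        then show "(\<lambda>i. iexp (g (u i) x)) \<longlonglongrightarrow> iexp (g p0 x)"
          by (intro tendsto_intros)
      qed
    qed (auto simp: m2)
  qed
qed

lemma dc_const_1: "dc_const 1 = pi"
  by (simp add: dc_const_def)

lemma dc_const_Suc0: "dc_const (Suc 0) = pi"
  using dc_const_1 by simp

lemma dcov_zero_if:
  assumes P: "prob_space M" and [measurable]: "U \<in> borel_measurable M" "V \<in> borel_measurable M"
    and eq: "\<And>t s. charf2 M U V t s = charf M U t * charf M V s"
  shows "dcov2 M U V = 0"
  unfolding dcov2_def by (simp add: eq)

lemma dcov_zero_imp:
  assumes P: "prob_space M" and [measurable]: "U \<in> borel_measurable M" "V \<in> borel_measurable M"
    and z: "dcov2 M U V = 0" and t0: "t0 > 0" and s0: "s0 > 0"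
  shows "charf2 M U V t0 s0 = charf M U t0 * charf M V s0"
proof (rule ccontr)
  define D where "D p = charf2 M U V (fst p) (snd p) - charf M U (fst p) * charf M V (snd p)" for p
  assume "charf2 M U V t0 s0 \<noteq> charf M U t0 * charf M V s0"
  then have D0: "D (t0, s0) \<noteq> 0" by (simp add: D_def)
  have cD: "isCont D (t0, s0)"
    unfolding D_def charf2_def charf_def
    by (intro continuous_intros cont_int[OF P]) (auto intro!: continuous_intros)
  define \<delta> where "\<delta> = cmod (D (t0, s0)) / 2"
  have \<delta>: "\<delta> > 0" using D0 by (simp add: \<delta>_def)
  obtain e where e: "e > 0" and eD: "\<And>y. dist y (t0, s0) < e \<Longrightarrow> dist (D y) (D (t0, s0)) < \<delta>"
    using cD \<delta> unfolding continuous_at_eps_delta by blast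
  define r where "r = min (e / 2) (min (t0 / 2) (s0 / 2))"
  have r: "r > 0" using e t0 s0 by (simp add: r_def)
  define B where "B = {t0 - r<..<t0 + r} \<times> {s0 - r<..<s0 + r}"
  define K where "K = pi * pi * (2 * t0)\<^sup>2 * (2 * s0)\<^sup>2"
  have K: "K > 0" using t0 s0 by (simp add: K_def)
  have lb: "ennreal (\<delta>\<^sup>2 / K) * indicator B p \<le>
      ennreal ((cmod (charf2 M U V (fst p) (snd p) - charf M U (fst p) * charf M V (snd p)))\<^sup>2
      / (dc_const 1 * dc_const 1 * \<bar>fst p\<bar> powr 2 * \<bar>snd p\<bar> powr 2))" for p
  proof (cases "p \<in> B")
    case True
    obtain t s where p: "p = (t, s)" by fastforce
    have ts: "t0 - r < t" "t < t0 + r" "s0 - r < s" "s < s0 + r" using True by (auto simp: B_def p)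
    have rr: "r \<le> t0/2" "r \<le> s0/2" "r \<le> e/2" by (simp_all add: r_def)
    have tpos: "t > 0" "s > 0" using ts rr t0 s0 by linarith+
    have "dist (t, s) (t0, s0) \<le> \<bar>t - t0\<bar> + \<bar>s - s0\<bar>"
      unfolding dist_Pair_Pair dist_real_def using sqrt_sum_squares_le_sum_abs[of "\<bar>t - t0\<bar>" "\<bar>s - s0\<bar>"] by simp
    also have "\<dots> < e" using ts rr by (auto simp: abs_less_iff)
    finally have "dist (D (t, s)) (D (t0, s0)) < \<delta>" by (rule eD)
    then have "cmod (D (t, s)) > \<delta>"
      using norm_triangle_ineq2[of "D (t0, s0)" "D (t, s)"] unfolding \<delta>_def dist_norm
      by (simp add: norm_minus_commute)
    then have n2: "(cmod (D (t, s)))\<^sup>2 \<ge> \<delta>\<^sup>2" using \<delta> by (intro power_mono) auto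
    have den: "dc_const 1 * dc_const 1 * \<bar>t\<bar> powr 2 * \<bar>s\<bar> powr 2 = pi * pi * t\<^sup>2 * s\<^sup>2"
      unfolding dc_const_1 using tpos by (simp add: powr_realpow[where n=2, simplified])
    have denpos: "pi * pi * t\<^sup>2 * s\<^sup>2 > 0" using tpos by simp
    have denK: "pi * pi * t\<^sup>2 * s\<^sup>2 \<le> K"
      unfolding K_def using tpos ts rr
      by (intro mult_mono power_mono) auto
    have "\<delta>\<^sup>2 / K \<le> \<delta>\<^sup>2 / (pi * pi * t\<^sup>2 * s\<^sup>2)"
      using denpos denK \<delta> by (intro divide_left_mono) auto
    also have "\<dots> \<le> (cmod (D (t, s)))\<^sup>2 / (pi * pi * t\<^sup>2 * s\<^sup>2)"
      using n2 denpos by (intro divide_right_mono) auto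
    finally show ?thesis using True
      by (simp add: p den D_def dc_const_Suc0)
  qed simp
  have f1: "(\<integral>\<^sup>+p. ennreal (\<delta>\<^sup>2 / K) * indicator B p \<partial>(lborel \<Otimes>\<^sub>M lborel)) \<le> dcov2 M U V"
    unfolding dcov2_def by (intro nn_integral_mono lb)
  have f2: "(\<integral>\<^sup>+p. ennreal (\<delta>\<^sup>2 / K) * indicator B p \<partial>(lborel \<Otimes>\<^sub>M lborel)) =
     ennreal (\<delta>\<^sup>2 / K) * (ennreal (2 * r) * ennreal (2 * r))"
    using r by (simp add: B_def nn_integral_cmult_indicator lborel.emeasure_pair_measure_Times)
  have f3: "ennreal (\<delta>\<^sup>2 / K) * (ennreal (2 * r) * ennreal (2 * r)) > 0"
    using \<delta> K r by (simp add: zero_less_iff_neq_zero)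
  show False using f1 f2 f3 z by (metis not_le)
qed


lemma indep_rv_iff:
  fixes X :: "'a \<Rightarrow> 'b::topological_space" and Y :: "'a \<Rightarrow> 'c::topological_space"
  assumes P: "prob_space M" and Xm: "X \<in> borel_measurable M" and Ym: "Y \<in> borel_measurable M"
  shows "indep_rv M X Y \<longleftrightarrow> (\<forall>A\<in>sets borel. \<forall>B\<in>sets borel.
     measure M (X -` A \<inter> Y -` B \<inter> space M) = measure M (X -` A \<inter> space M) * measure M (Y -` B \<inter> space M))"
proof -
  interpret prob_space M by (rule P)
  define GX where "GX = {X -` A \<inter> space M | A. A \<in> sets borel}"
  define GY where "GY = {Y -` B \<inter> space M | B. B \<in> sets borel}"
  have GXe: "GX \<subseteq> events" unfolding GX_def using Xm by (auto intro: measurable_sets)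
  have GYe: "GY \<subseteq> events" unfolding GY_def using Ym by (auto intro: measurable_sets)
  have ir: "indep_rv M X Y \<longleftrightarrow> indep_set (sigma_sets (space M) GX) (sigma_sets (space M) GY)"
    unfolding indep_rv_def GX_def GY_def using Xm Ym by simp
  have int: "X -` A \<inter> space M \<inter> (Y -` B \<inter> space M) = X -` A \<inter> Y -` B \<inter> space M" for A B by auto
  show ?thesis
  proof
    assume "indep_rv M X Y"
    then have I: "indep_set (sigma_sets (space M) GX) (sigma_sets (space M) GY)" using ir by simp
    show "\<forall>A\<in>sets borel. \<forall>B\<in>sets borel. prob (X -` A \<inter> Y -` B \<inter> space M) = prob (X -` A \<inter> space M) * prob (Y -` B \<inter> space M)"
    proof (intro ballI)
      fix A B assume A: "A \<in> sets (borel :: 'b measure)" and B: "B \<in> sets (borel :: 'c measure)"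
      have a: "X -` A \<inter> space M \<in> sigma_sets (space M) GX" unfolding GX_def using A by (auto intro: sigma_sets.Basic)
      have b: "Y -` B \<inter> space M \<in> sigma_sets (space M) GY" unfolding GY_def using B by (auto intro: sigma_sets.Basic)
      show "prob (X -` A \<inter> Y -` B \<inter> space M) = prob (X -` A \<inter> space M) * prob (Y -` B \<inter> space M)"
        using I[unfolded indep_sets2_eq] a b int by metis
    qed
  next
    assume H: "\<forall>A\<in>sets borel. \<forall>B\<in>sets borel. prob (X -` A \<inter> Y -` B \<inter> space M) = prob (X -` A \<inter> space M) * prob (Y -` B \<inter> space M)"
    have "indep_set GX GY"
      unfolding indep_sets2_eq using GXe GYe H int unfolding GX_def GY_def by auto
    moreover have "Int_stable GX"
    proof (rule Int_stableI)
      fix a b assume "a \<in> GX" "b \<in> GX"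
      then obtain A B where "a = X -` A \<inter> space M" "b = X -` B \<inter> space M" "A \<in> sets borel" "B \<in> sets borel"
        unfolding GX_def by auto
      then have "a \<inter> b = X -` (A \<inter> B) \<inter> space M" "A \<inter> B \<in> sets borel" by auto
      then show "a \<inter> b \<in> GX" unfolding GX_def by blast
    qed
    moreover have "Int_stable GY"
    proof (rule Int_stableI)
      fix a b assume "a \<in> GY" "b \<in> GY"
      then obtain A B where "a = Y -` A \<inter> space M" "b = Y -` B \<inter> space M" "A \<in> sets borel" "B \<in> sets borel"
        unfolding GY_def by auto
      then have "a \<inter> b = Y -` (A \<inter> B) \<inter> space M" "A \<inter> B \<in> sets borel" by auto
      then show "a \<inter> b \<in> GY" unfolding GY_def by blast
    qed
    ultimately show "indep_rv M X Y" using ir indep_set_sigma_sets by simp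
  qed
qed


lemma pf_iff_distr:
  fixes X :: "'a \<Rightarrow> 'b::euclidean_space" and Y :: "'a \<Rightarrow> 'c::euclidean_space"
  assumes P: "prob_space M" and Xm[measurable]: "X \<in> borel_measurable M" and Ym[measurable]: "Y \<in> borel_measurable M"
  shows "(\<forall>A\<in>sets borel. \<forall>B\<in>sets borel.
     measure M (X -` A \<inter> Y -` B \<inter> space M) = measure M (X -` A \<inter> space M) * measure M (Y -` B \<inter> space M))
    \<longleftrightarrow> distr M borel (\<lambda>\<omega>. (X \<omega>, Y \<omega>)) = distr M borel X \<Otimes>\<^sub>M distr M borel Y"
proof -
  interpret prob_space M by (rule P)
  interpret dX: prob_space "distr M borel X" by (rule prob_space_distr) simp
  interpret dY: prob_space "distr M borel Y" by (rule prob_space_distr) simp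
  interpret dZ: prob_space "distr M borel (\<lambda>\<omega>. (X \<omega>, Y \<omega>))" by (rule prob_space_distr) simp
  have pre: "(\<lambda>\<omega>. (X \<omega>, Y \<omega>)) -` (A \<times> B) \<inter> space M = X -` A \<inter> Y -` B \<inter> space M" for A B by auto
  have AB: "A \<times> B \<in> sets borel" if "A \<in> sets borel" "B \<in> sets borel" for A :: "'b set" and B :: "'c set"
    using that by (metis borel_prod pair_measureI)
  have eZ: "emeasure (distr M borel (\<lambda>\<omega>. (X \<omega>, Y \<omega>))) (A \<times> B) = ennreal (prob (X -` A \<inter> Y -` B \<inter> space M))"
    if "A \<in> sets borel" "B \<in> sets borel" for A B
    using AB[OF that] by (simp add: emeasure_distr pre emeasure_eq_measure)
  have eP: "emeasure (distr M borel X \<Otimes>\<^sub>M distr M borel Y) (A \<times> B) =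
      ennreal (prob (X -` A \<inter> space M) * prob (Y -` B \<inter> space M))"
    if "A \<in> sets borel" "B \<in> sets borel" for A B
    using that by (simp add: dY.emeasure_pair_measure_Times emeasure_distr emeasure_eq_measure ennreal_mult)
  show ?thesis
  proof
    assume H: "\<forall>A\<in>sets borel. \<forall>B\<in>sets borel. prob (X -` A \<inter> Y -` B \<inter> space M) = prob (X -` A \<inter> space M) * prob (Y -` B \<inter> space M)"
    have "distr M borel X \<Otimes>\<^sub>M distr M borel Y = distr M borel (\<lambda>\<omega>. (X \<omega>, Y \<omega>))"
    proof (rule pair_measure_eqI)
      show "sigma_finite_measure (distr M borel X)" by (rule dX.sigma_finite_measure_axioms)
      show "sigma_finite_measure (distr M borel Y)" by (rule dY.sigma_finite_measure_axioms)
      show "sets (distr M borel X \<Otimes>\<^sub>M distr M borel Y) = sets (distr M borel (\<lambda>\<omega>. (X \<omega>, Y \<omega>)))"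
        by (simp add: borel_prod[symmetric] cong: sets_pair_measure_cong)
      fix A B assume "A \<in> sets (distr M borel X)" "B \<in> sets (distr M borel Y)"
      then have "A \<in> sets borel" "B \<in> sets borel" by auto
      then show "emeasure (distr M borel X) A * emeasure (distr M borel Y) B = emeasure (distr M borel (\<lambda>\<omega>. (X \<omega>, Y \<omega>))) (A \<times> B)"
        using eP eZ H by (simp add: dY.emeasure_pair_measure_Times)
    qed
    then show "distr M borel (\<lambda>\<omega>. (X \<omega>, Y \<omega>)) = distr M borel X \<Otimes>\<^sub>M distr M borel Y" by simp
  next
    assume E: "distr M borel (\<lambda>\<omega>. (X \<omega>, Y \<omega>)) = distr M borel X \<Otimes>\<^sub>M distr M borel Y"
    show "\<forall>A\<in>sets borel. \<forall>B\<in>sets borel. prob (X -` A \<inter> Y -` B \<inter> space M) = prob (X -` A \<inter> space M) * prob (Y -` B \<inter> space M)"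
    proof (intro ballI)
      fix A B assume A: "A \<in> sets (borel :: 'b measure)" and B: "B \<in> sets (borel :: 'c measure)"
      have "ennreal (prob (X -` A \<inter> Y -` B \<inter> space M)) = ennreal (prob (X -` A \<inter> space M) * prob (Y -` B \<inter> space M))"
        using eZ[OF A B] eP[OF A B] E by simp
      then show "prob (X -` A \<inter> Y -` B \<inter> space M) = prob (X -` A \<inter> space M) * prob (Y -` B \<inter> space M)"
        by (simp add: ennreal_inj)
    qed
  qed
qed

lemma char_pair:
  fixes X :: "'a \<Rightarrow> 'b::euclidean_space" and Y :: "'a \<Rightarrow> 'c::euclidean_space"
  assumes P: "prob_space M" and Xm[measurable]: "X \<in> borel_measurable M" and Ym[measurable]: "Y \<in> borel_measurable M"
  shows "(CLINT z|distr M borel (\<lambda>\<omega>. (X \<omega>, Y \<omega>)). iexp ((a, b) \<bullet> z)) = (CLINT \<omega>|M. iexp (a \<bullet> X \<omega> + b \<bullet> Y \<omega>))"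
    and "(CLINT z|distr M borel X \<Otimes>\<^sub>M distr M borel Y. iexp ((a, b) \<bullet> z)) =
       (CLINT \<omega>|M. iexp (a \<bullet> X \<omega>)) * (CLINT \<omega>|M. iexp (b \<bullet> Y \<omega>))"
proof -
  interpret prob_space M by (rule P)
  interpret dX: prob_space "distr M borel X" by (rule prob_space_distr) simp
  interpret dY: prob_space "distr M borel Y" by (rule prob_space_distr) simp
  interpret P2: pair_sigma_finite "distr M borel X" "distr M borel Y"
    by (intro pair_sigma_finite.intro dX.sigma_finite_measure_axioms dY.sigma_finite_measure_axioms)
  show "(CLINT z|distr M borel (\<lambda>\<omega>. (X \<omega>, Y \<omega>)). iexp ((a, b) \<bullet> z)) = (CLINT \<omega>|M. iexp (a \<bullet> X \<omega> + b \<bullet> Y \<omega>))"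
    by (subst integral_distr) auto
  have intg: "integrable (distr M borel X \<Otimes>\<^sub>M distr M borel Y) (\<lambda>z. iexp ((a, b) \<bullet> z))"
  proof (rule intg_bound[where B=1])
    show "prob_space (distr M borel X \<Otimes>\<^sub>M distr M borel Y)"
      by (intro prob_space_pair dX.prob_space_axioms dY.prob_space_axioms)
    have s: "sets (distr M borel X \<Otimes>\<^sub>M distr M borel Y) = sets borel"
      by (simp add: borel_prod[symmetric] cong: sets_pair_measure_cong)
    have m: "(\<lambda>z::'b \<times> 'c. iexp ((a, b) \<bullet> z)) \<in> borel_measurable borel" by measurable
    show "(\<lambda>z. iexp ((a, b) \<bullet> z)) \<in> borel_measurable (distr M borel X \<Otimes>\<^sub>M distr M borel Y)"
      by (simp only: measurable_cong_sets[OF s refl] m)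
  qed simp
  have "(CLINT z|distr M borel X \<Otimes>\<^sub>M distr M borel Y. iexp ((a, b) \<bullet> z)) =
      (CLINT x|distr M borel X. CLINT y|distr M borel Y. iexp ((a, b) \<bullet> (x, y)))"
    by (rule P2.integral_fst'[OF intg, symmetric])
  also have "\<dots> = (CLINT x|distr M borel X. iexp (a \<bullet> x) * (CLINT y|distr M borel Y. iexp (b \<bullet> y)))"
    by (simp only: inner_Pair iexp_add integral_mult_right_zero)
  also have "\<dots> = (CLINT x|distr M borel X. iexp (a \<bullet> x)) * (CLINT y|distr M borel Y. iexp (b \<bullet> y))"
    by simp
  also have "\<dots> = (CLINT \<omega>|M. iexp (a \<bullet> X \<omega>)) * (CLINT \<omega>|M. iexp (b \<bullet> Y \<omega>))"
    by (simp add: integral_distr)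
  finally show "(CLINT z|distr M borel X \<Otimes>\<^sub>M distr M borel Y. iexp ((a, b) \<bullet> z)) =
       (CLINT \<omega>|M. iexp (a \<bullet> X \<omega>)) * (CLINT \<omega>|M. iexp (b \<bullet> Y \<omega>))" .
qed


theorem lemma4p1:
  fixes M :: "'a measure" and X :: "'a \<Rightarrow> real ^ 'p" and Y :: "'a \<Rightarrow> real ^ 'q"
  assumes "prob_space M"
    and "X \<in> borel_measurable M" and "Y \<in> borel_measurable M"
  shows "indep_rv M X Y \<longleftrightarrow>
    (\<forall>(u::real ^ 'p) (v::real ^ 'q). norm u = 1 \<longrightarrow> norm v = 1 \<longrightarrow>
        dcov2 M (\<lambda>\<omega>. u \<bullet> X \<omega>) (\<lambda>\<omega>. v \<bullet> Y \<omega>) = 0)"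
proof -
  have P: "prob_space M" by fact
  interpret prob_space M by (rule P)
  note Xm[measurable] = assms(2) and Ym[measurable] = assms(3)
  define \<mu> where "\<mu> = distr M borel (\<lambda>\<omega>. (X \<omega>, Y \<omega>))"
  define \<nu> where "\<nu> = distr M borel X \<Otimes>\<^sub>M distr M borel Y"
  define H where "H \<longleftrightarrow> (\<forall>a b. (CLINT \<omega>|M. iexp (a \<bullet> X \<omega> + b \<bullet> Y \<omega>)) =
      (CLINT \<omega>|M. iexp (a \<bullet> X \<omega>)) * (CLINT \<omega>|M. iexp (b \<bullet> Y \<omega>)))"
  have s1: "indep_rv M X Y \<longleftrightarrow> \<mu> = \<nu>"
    unfolding \<mu>_def \<nu>_def using indep_rv_iff[OF P Xm Ym] pf_iff_distr[OF P Xm Ym] by simp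
  have s2: "\<mu> = \<nu> \<longleftrightarrow> H"
  proof
    assume E: "\<mu> = \<nu>"
    show H unfolding H_def
      using char_pair[OF P Xm Ym] E unfolding \<mu>_def \<nu>_def by metis
  next
    assume H
    show "\<mu> = \<nu>"
    proof (rule char_uniq)
      show "prob_space \<mu>" unfolding \<mu>_def by (rule prob_space_distr) simp
      show "prob_space \<nu>" unfolding \<nu>_def by (intro prob_space_pair prob_space_distr) simp_all
      show "sets \<mu> = sets borel" unfolding \<mu>_def by simp
      show "sets \<nu> = sets borel" unfolding \<nu>_def
        by (simp add: borel_prod[symmetric] cong: sets_pair_measure_cong)
      fix w :: "(real ^ 'p) \<times> (real ^ 'q)"
      obtain a b where w: "w = (a, b)" by fastforce
      show "(CLINT x|\<mu>. iexp (w \<bullet> x)) = (CLINT x|\<nu>. iexp (w \<bullet> x))"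
        using \<open>H\<close> char_pair[OF P Xm Ym, of a b] unfolding H_def \<mu>_def \<nu>_def w by simp
    qed
  qed
  have s3: "H \<longleftrightarrow> (\<forall>(u::real ^ 'p) (v::real ^ 'q). norm u = 1 \<longrightarrow> norm v = 1 \<longrightarrow>
        dcov2 M (\<lambda>\<omega>. u \<bullet> X \<omega>) (\<lambda>\<omega>. v \<bullet> Y \<omega>) = 0)"
  proof
    assume H
    show "\<forall>(u::real ^ 'p) (v::real ^ 'q). norm u = 1 \<longrightarrow> norm v = 1 \<longrightarrow>
        dcov2 M (\<lambda>\<omega>. u \<bullet> X \<omega>) (\<lambda>\<omega>. v \<bullet> Y \<omega>) = 0"
    proof (intro allI impI)
      fix u :: "real ^ 'p" and v :: "real ^ 'q"
      show "dcov2 M (\<lambda>\<omega>. u \<bullet> X \<omega>) (\<lambda>\<omega>. v \<bullet> Y \<omega>) = 0"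
      proof (rule dcov_zero_if[OF P])
        fix t s
        have "charf2 M (\<lambda>\<omega>. u \<bullet> X \<omega>) (\<lambda>\<omega>. v \<bullet> Y \<omega>) t s =
            (CLINT \<omega>|M. iexp ((t *\<^sub>R u) \<bullet> X \<omega> + (s *\<^sub>R v) \<bullet> Y \<omega>))"
          unfolding charf2_def by simp
        also have "\<dots> = (CLINT \<omega>|M. iexp ((t *\<^sub>R u) \<bullet> X \<omega>)) * (CLINT \<omega>|M. iexp ((s *\<^sub>R v) \<bullet> Y \<omega>))"
          using \<open>H\<close> unfolding H_def by blast
        also have "\<dots> = charf M (\<lambda>\<omega>. u \<bullet> X \<omega>) t * charf M (\<lambda>\<omega>. v \<bullet> Y \<omega>) s"
          unfolding charf_def by simp
        finally show "charf2 M (\<lambda>\<omega>. u \<bullet> X \<omega>) (\<lambda>\<omega>. v \<bullet> Y \<omega>) t s =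
            charf M (\<lambda>\<omega>. u \<bullet> X \<omega>) t * charf M (\<lambda>\<omega>. v \<bullet> Y \<omega>) s" .
      qed simp_all
    qed
  next
    assume R: "\<forall>(u::real ^ 'p) (v::real ^ 'q). norm u = 1 \<longrightarrow> norm v = 1 \<longrightarrow>
        dcov2 M (\<lambda>\<omega>. u \<bullet> X \<omega>) (\<lambda>\<omega>. v \<bullet> Y \<omega>) = 0"
    show H unfolding H_def
    proof (intro allI)
      fix a :: "real ^ 'p" and b :: "real ^ 'q"
      show "(CLINT \<omega>|M. iexp (a \<bullet> X \<omega> + b \<bullet> Y \<omega>)) =
          (CLINT \<omega>|M. iexp (a \<bullet> X \<omega>)) * (CLINT \<omega>|M. iexp (b \<bullet> Y \<omega>))"
      proof (cases "a = 0 \<or> b = 0")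
        case True
        then show ?thesis by (auto simp: prob_space)
      next
        case False
        then have a0: "norm a > 0" and b0: "norm b > 0" by auto
        define u where "u = (1 / norm a) *\<^sub>R a"
        define v where "v = (1 / norm b) *\<^sub>R b"
        have nu: "norm u = 1" "norm v = 1" using a0 b0 by (simp_all add: u_def v_def)
        have eu: "norm a * (u \<bullet> x) = a \<bullet> x" for x using a0 by (simp add: u_def)
        have ev: "norm b * (v \<bullet> y) = b \<bullet> y" for y using b0 by (simp add: v_def)
        have "charf2 M (\<lambda>\<omega>. u \<bullet> X \<omega>) (\<lambda>\<omega>. v \<bullet> Y \<omega>) (norm a) (norm b) =
              charf M (\<lambda>\<omega>. u \<bullet> X \<omega>) (norm a) * charf M (\<lambda>\<omega>. v \<bullet> Y \<omega>) (norm b)"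
          using R nu a0 b0 by (intro dcov_zero_imp[OF P]) auto
        then show ?thesis unfolding charf2_def charf_def eu ev .
      qed
    qed
  qed
  show ?thesis using s1 s2 s3 by simp
qed

end
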